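(* Let $D$ be a digraph in $\mathcal D_{10,3}$ with exactly $33$ edges. Then for all $i,j\in\{10,9,8,7\}$ with $i>j$, $D$ contains the edge from $i$ to $j$.
   Context: For positive integers $v,m$, $\mathcal D_{v,m}$ is the class of all digraphs (without multiple edges) on the vertex set $\{v,v-1,\dots,1\}$ such that every edge $i\to j$ satisfies $i>j$, and $[i]^+\le m+[i]^-$ for every vertex $i$, where $[i]^+$ and $[i]^-$ denote the outdegree and indegree of $i$. *)

theory Defs
  imports Main
begin

definition outdeg :: "(nat \<times> nat) set \<Rightarrow> nat \<Rightarrow> nat" where
  "outdeg E i = card {j. (i, j) \<in> E}"

definition indeg :: "(nat \<times> nat) set \<Rightarrow> nat \<Rightarrow> nat" where
  "indeg E i = card {j. (j, i) \<in> E}"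

definition D_class :: "nat \<Rightarrow> nat \<Rightarrow> (nat \<times> nat) set set" where
  "D_class v m = {E. E \<subseteq> {1..v} \<times> {1..v}
                     \<and> (\<forall>(i, j) \<in> E. i > j)
                     \<and> (\<forall>i \<in> {1..v}. outdeg E i \<le> m + indeg E i)}"

end

theory Submission
  imports Defs
begin

theorem lemma2:
  fixes E :: "(nat \<times> nat) set"
  assumes "E \<in> D_class 10 3"
    and "card E = 33"
  shows "\<forall>i \<in> {7..10}. \<forall>j \<in> {7..10}. i > j \<longrightarrow> (i, j) \<in> E"
proof -
  define T :: "nat set" where "T = {7..10}"
  define R :: "nat set" where "R = {1..6}"
  have sub: "E \<subseteq> {1..10} \<times> {1..10}" and dn: "\<And>i j. (i,j) \<in> E \<Longrightarrow> i > j"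
    and deg: "\<And>i. i \<in> {1..10} \<Longrightarrow> outdeg E i \<le> 3 + indeg E i"
    using assms(1) unfolding D_class_def by auto
  have finE: "finite E" using sub by (rule finite_subset) auto
  define A where "A = E \<inter> T \<times> T"
  define B where "B = E \<inter> T \<times> R"
  define C where "C = E \<inter> R \<times> R"
  have finA: "finite A" "finite B" "finite C" using finE unfolding A_def B_def C_def by auto
  have "E \<subseteq> A \<union> B \<union> C"
  proof
    fix x assume x: "x \<in> E"
    obtain i j where [simp]: "x = (i,j)" by (cases x)
    have "i \<in> {1..10}" "j \<in> {1..10}" "i > j" using sub x dn by auto
    then show "x \<in> A \<union> B \<union> C" using x unfolding A_def B_def C_def T_def R_def by auto
  qed
  hence "card E \<le> card (A \<union> B \<union> C)" using finA by (intro card_mono) auto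
  also have "\<dots> \<le> card A + card B + card C" using finA
    by (metis add_le_mono1 card_Un_le le_trans)
  finally have tot: "33 \<le> card A + card B + card C" using assms(2) by simp
  define SA :: "(nat\<times>nat) set" where "SA = {(i,j). i \<in> T \<and> j \<in> T \<and> i > j}"
  have SAeq: "finite SA" unfolding SA_def T_def
    by (rule finite_subset[of _ "{7..10} \<times> {7..10}"]) auto
  have cSA: "card SA = 6"
  proof -
    have "SA = (SIGMA i:{7..10}. {7..<i})" unfolding SA_def T_def by auto
    also have "card \<dots> = 6" by (simp add: card_SigmaI numeral_eq_Suc atLeastAtMostSuc_conv)
    finally show ?thesis .
  qed
  have ASA: "A \<subseteq> SA" using dn unfolding A_def SA_def by auto
  have cA: "card A \<le> 6" using card_mono[OF _ ASA] cSA SAeq by simp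
  define SC :: "(nat\<times>nat) set" where "SC = {(i,j). i \<in> R \<and> j \<in> R \<and> i > j}"
  have SCeq: "finite SC" unfolding SC_def R_def
    by (rule finite_subset[of _ "{1..6} \<times> {1..6}"]) auto
  have R6: "{1..6::nat} = {1,2,3,4,5,6}" by (auto simp: numeral_eq_Suc)
  have cSC: "card SC = 15"
  proof -
    have "SC = (SIGMA i:{1..6}. {1..<i})" unfolding SC_def R_def by auto
    also have "card \<dots> = 15" unfolding R6 by (simp add: card_SigmaI)
    finally show ?thesis .
  qed
  have "C \<subseteq> SC" using dn unfolding C_def SC_def by auto
  hence cC: "card C \<le> 15" using card_mono[of SC C] cSC SCeq by simp
  have finT: "finite T" unfolding T_def by simp
  have out: "(\<Sum>i\<in>T. outdeg E i) = card (A \<union> B)"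
  proof -
    have "(\<Sum>i\<in>T. outdeg E i) = card (SIGMA i:T. {j. (i,j) \<in> E})"
      unfolding outdeg_def
      by (rule card_SigmaI[symmetric]) (use finT in auto,
          rule finite_subset[of _ "snd ` E"], force, use finE in simp)
    also have "(SIGMA i:T. {j. (i,j) \<in> E}) = A \<union> B"
    proof (rule set_eqI)
      fix x :: "nat \<times> nat" obtain i j where [simp]: "x = (i,j)" by (cases x)
      show "x \<in> (SIGMA i:T. {j. (i,j) \<in> E}) \<longleftrightarrow> x \<in> A \<union> B"
      proof
        assume h: "x \<in> (SIGMA i:T. {j. (i,j) \<in> E})"
        hence "j \<in> {1..10}" "i > j" using sub dn by auto
        thus "x \<in> A \<union> B" using h unfolding A_def B_def T_def R_def by auto
      qed (auto simp: A_def B_def)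
    qed
    finally show ?thesis .
  qed
  have inn: "(\<Sum>i\<in>T. indeg E i) = card A"
  proof -
    have "(\<Sum>i\<in>T. indeg E i) = card (SIGMA i:T. {j. (j,i) \<in> E})"
      unfolding indeg_def
      by (rule card_SigmaI[symmetric]) (use finT in auto,
          rule finite_subset[of _ "fst ` E"], force, use finE in simp)
    also have "(SIGMA i:T. {j. (j,i) \<in> E}) = prod.swap ` A"
    proof (rule set_eqI)
      fix x :: "nat \<times> nat" obtain i j where [simp]: "x = (i,j)" by (cases x)
      show "x \<in> (SIGMA i:T. {j. (j,i) \<in> E}) \<longleftrightarrow> x \<in> prod.swap ` A"
      proof
        assume h: "x \<in> (SIGMA i:T. {j. (j,i) \<in> E})"
        hence "j \<in> {1..10}" "j > i" using sub dn by auto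
        hence "(j,i) \<in> A" using h unfolding A_def T_def by auto
        thus "x \<in> prod.swap ` A" by force
      qed (auto simp: A_def)
    qed
    also have "card (prod.swap ` A) = card A" by (rule card_image) simp
    finally show ?thesis .
  qed
  have "(\<Sum>i\<in>T. outdeg E i) \<le> (\<Sum>i\<in>T. 3 + indeg E i)"
    by (rule sum_mono) (rule deg, auto simp: T_def)
  also have "\<dots> = 12 + (\<Sum>i\<in>T. indeg E i)" by (simp add: sum.distrib T_def)
  finally have "card (A \<union> B) \<le> 12 + card A" using out inn by simp
  moreover have "card (A \<union> B) = card A + card B"
    using finA by (intro card_Un_disjoint) (auto simp: A_def B_def T_def R_def)
  ultimately have "card B \<le> 12" by simp
  with tot cA cC have "card A = 6" by simp
  hence "A = SA" using ASA cSA SAeq by (intro card_subset_eq) auto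
  hence AS: "SA \<subseteq> E" unfolding A_def by blast
  show ?thesis
  proof (intro ballI impI)
    fix i j :: nat assume "i \<in> {7..10}" "j \<in> {7..10}" "i > j"
    hence "(i,j) \<in> SA" unfolding SA_def T_def by blast
    thus "(i,j) \<in> E" using AS by blast
  qed
qed

end
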